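(* Let $P$ and $W$ be finite point sets in the plane with $P\cup W$ in general position, let $p\in P$ with $W\setminus\{p\}\neq\varnothing$, and let $w_1,\dots,w_t$ be the neighbors of $p$ in the Delaunay triangulation $\mathrm{DT}(W\cup\{p\})$ listed in counterclockwise radial order around $p$ (indices taken cyclically, $w_{t+1}=w_1$). Let $q\in P\setminus\{p\}$ be a point whose direction from $p$ lies strictly between the directions of $w_i$ and $w_{i+1}$ in the counterclockwise sector from $w_i$ to $w_{i+1}$, and let $\measuredangle w_ipw_{i+1}$ denote the counterclockwise angle of that sector. If $\measuredangle w_ipw_{i+1}\ge\pi$, then $p$ and $q$ are adjacent in $\mathrm{DG}^-(P,W)$. If $\measuredangle w_ipw_{i+1}<\pi$, then $p$ and $q$ are adjacent in $\mathrm{DG}^-(P,W)$ if and only if $q$ lies in the interior of the circle through $p$, $w_i$ and $w_{i+1}$.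
   Context: Let $P$ (the vertices) and $W$ (the witnesses) be finite point sets in $\mathbb{R}^2$; $P$ and $W$ may share points. The witness Delaunay graph $\mathrm{DG}^-(P,W)$ is the graph with vertex set $P$ in which distinct $x,y\in P$ are adjacent if and only if there is an open disk containing no point of $W$ whose bounding circle passes through $x$ and $y$. General position of $P\cup W$ means that no three distinct points of $P\cup W$ are collinear and no four distinct points of $P\cup W$ are concyclic. For a finite point set $Q$ in general position, $\mathrm{DT}(Q)$ is its Delaunay triangulation: distinct $a,b\in Q$ are joined iff some open disk whose boundary passes through $a$ and $b$ contains no point of $Q$. *)

theory Defs
  imports "HOL-Analysis.Analysis"
begin

definition concyclic4 :: "complex \<Rightarrow> complex \<Rightarrow> complex \<Rightarrow> complex \<Rightarrow> bool" where
  "concyclic4 a b c d \<longleftrightarrow>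
     (\<exists>z r. dist z a = r \<and> dist z b = r \<and> dist z c = r \<and> dist z d = r)"

definition gen_pos :: "complex set \<Rightarrow> bool" where
  "gen_pos S \<longleftrightarrow>
     (\<forall>a\<in>S. \<forall>b\<in>S. \<forall>c\<in>S. distinct [a,b,c] \<longrightarrow> \<not> collinear {a,b,c}) \<and>
     (\<forall>a\<in>S. \<forall>b\<in>S. \<forall>c\<in>S. \<forall>d\<in>S. distinct [a,b,c,d] \<longrightarrow> \<not> concyclic4 a b c d)"

definition DGminus_adj :: "complex set \<Rightarrow> complex set \<Rightarrow> complex \<Rightarrow> complex \<Rightarrow> bool" where
  "DGminus_adj P W x y \<longleftrightarrow> x \<in> P \<and> y \<in> P \<and> x \<noteq> y \<and>
     (\<exists>z r. dist z x = r \<and> dist z y = r \<and> ball z r \<inter> W = {})"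

definition DT_adj :: "complex set \<Rightarrow> complex \<Rightarrow> complex \<Rightarrow> bool" where
  "DT_adj Q a b \<longleftrightarrow> a \<in> Q \<and> b \<in> Q \<and> a \<noteq> b \<and>
     (\<exists>z r. dist z a = r \<and> dist z b = r \<and> ball z r \<inter> Q = {})"

text \<open>Counterclockwise angle at p from the direction of a to the direction of b,
  taking values in (0, 2 pi]; equal directions give 2 pi (full turn).\<close>
definition ccw_angle :: "complex \<Rightarrow> complex \<Rightarrow> complex \<Rightarrow> real" where
  "ccw_angle p a b = (let \<theta> = Arg ((b - p) / (a - p)) in if \<theta> \<le> 0 then \<theta> + 2 * pi else \<theta>)"

definition in_circumdisk :: "complex \<Rightarrow> complex \<Rightarrow> complex \<Rightarrow> complex \<Rightarrow> bool" where
  "in_circumdisk a b c q \<longleftrightarrow>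
     (\<exists>z. dist z a = dist z b \<and> dist z b = dist z c \<and> dist z q < dist z a)"

end

theory Submission imports Defs begin

lemma rep:
  assumes "u \<noteq> p" "wi \<noteq> p"
  shows "(u - p) / (wi - p) = of_real (cmod ((u - p) / (wi - p))) * cis (ccw_angle p wi u)"
    and "0 < ccw_angle p wi u" "ccw_angle p wi u \<le> 2 * pi"
proof -
  let ?z = "(u - p) / (wi - p)"
  have z: "?z = of_real (cmod ?z) * cis (Arg ?z)"
    using rcis_cmod_Arg[of ?z] by (simp add: rcis_def)
  have c: "cis (Arg ?z + 2 * pi) = cis (Arg ?z)"
    by (simp add: complex_eq_iff)
  show "?z = of_real (cmod ?z) * cis (ccw_angle p wi u)"
    using z c unfolding ccw_angle_def Let_def by (cases "Arg ?z \<le> 0") auto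
  show "0 < ccw_angle p wi u" "ccw_angle p wi u \<le> 2 * pi"
    using Arg_bounded[of ?z] unfolding ccw_angle_def Let_def by auto
qed

lemma dist_sq: "(dist (p + c) w)^2 = (cmod (w - p))^2 - 2 * Re (cnj c * (w - p)) + (cmod c)^2"
  unfolding dist_norm cmod_power2 by (simp add: power2_eq_square algebra_simps)

lemma sq1: "0 \<le> (a::real) \<Longrightarrow> 0 \<le> b \<Longrightarrow> a < b \<longleftrightarrow> a^2 < b^2"
  using power_mono_iff[of b a "2::nat"] by linarith

definition val :: "complex \<Rightarrow> complex \<Rightarrow> complex \<Rightarrow> real" where
  "val p c w = Re (cnj c * (w - p)) / (cmod (w - p))^2"

definition cinv :: "complex \<Rightarrow> complex" where
  "cinv x = x / of_real ((cmod x)^2)"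

lemma val_inv: "val p c w = Re (cnj c * cinv (w - p))"
  unfolding val_def cinv_def by (simp add: Re_divide_of_real mult.assoc[symmetric] )

lemma ball_iff: assumes "w \<noteq> p" shows "dist (p + c) w < cmod c \<longleftrightarrow> 1/2 < val p c w"
proof -
  have pos: "0 < (cmod (w - p))^2" using assms by simp
  have "dist (p + c) w < cmod c \<longleftrightarrow> (dist (p + c) w)^2 < (cmod c)^2"
    by (rule sq1) auto
  also have "\<dots> \<longleftrightarrow> (cmod (w - p))^2 < 2 * Re (cnj c * (w - p))" unfolding dist_sq by linarith
  also have "\<dots> \<longleftrightarrow> 1/2 < val p c w" unfolding val_def using pos by (simp add: field_simps)
  finally show ?thesis .
qed

lemma sphere_iff: assumes "w \<noteq> p" shows "dist (p + c) w = cmod c \<longleftrightarrow> val p c w = 1/2"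
proof -
  have pos: "0 < (cmod (w - p))^2" using assms by simp
  have "dist (p + c) w = cmod c \<longleftrightarrow> (dist (p + c) w)^2 = (cmod c)^2"
    by (simp add: power2_eq_iff_nonneg)
  also have "\<dots> \<longleftrightarrow> (cmod (w - p))^2 = 2 * Re (cnj c * (w - p))" unfolding dist_sq by linarith
  also have "\<dots> \<longleftrightarrow> val p c w = 1/2" unfolding val_def using pos by (simp add: field_simps)
  finally show ?thesis .
qed

lemma val_scale: "val p (k / of_real t) w = val p k w / t"
  unfolding val_def by (simp add: Re_divide_of_real)

lemma circ:
  assumes "x \<noteq> p" "0 < val p k x" "\<forall>w\<in>W-{p}. val p k w \<le> val p k x"
  shows "\<exists>z r. dist z p = r \<and> dist z x = r \<and> ball z r \<inter> (W \<union> {p}) = {}"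
proof -
  define c where "c = k / of_real (2 * val p k x)"
  have vc: "val p c w = val p k w / (2 * val p k x)" for w unfolding c_def val_scale ..
  have "dist (p + c) p = cmod c" by (simp add: dist_norm)
  moreover have "dist (p + c) x = cmod c" using assms(1,2) by (simp add: sphere_iff vc)
  moreover have "ball (p + c) (cmod c) \<inter> (W \<union> {p}) = {}"
  proof (rule ccontr)
    assume "\<not> ?thesis"
    then obtain w where "w \<in> ball (p + c) (cmod c) \<inter> (W \<union> {p})" by blast
    hence w: "w \<in> W \<union> {p}" "dist (p + c) w < cmod c" by auto
    have "w \<noteq> p" using w(2) by (auto simp: dist_norm)
    hence "1/2 < val p c w" using w(2) ball_iff by blast
    hence "val p k x < val p k w" using assms(2) unfolding vc by (simp add: field_simps)
    moreover have "w \<in> W - {p}" using w(1) \<open>w \<noteq> p\<close> by auto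
    ultimately show False using assms(3) by (meson not_le)
  qed
  ultimately show ?thesis by blast
qed

lemma cramer:
  assumes "Im (cnj a * b) \<noteq> 0"
  shows "x = of_real (Im (cnj x * b) / Im (cnj a * b)) * a + of_real (Im (cnj a * x) / Im (cnj a * b)) * b"
proof -
  let ?D = "Im (cnj a * b)"
  have "of_real ?D * x = of_real (Im (cnj x * b)) * a + of_real (Im (cnj a * x)) * b"
    by (simp add: complex_eq_iff algebra_simps)
  hence "x = (of_real (Im (cnj x * b)) * a + of_real (Im (cnj a * x)) * b) / of_real ?D"
    using assms by (metis nonzero_mult_div_cancel_left of_real_eq_0_iff)
  thus ?thesis by (simp add: add_divide_distrib of_real_divide)
qed

lemma Re_lin: "Re (cnj c * (of_real \<alpha> * a + of_real \<beta> * b)) = \<alpha> * Re (cnj c * a) + \<beta> * Re (cnj c * b)"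
  by (simp add: algebra_simps)

lemma Im_cinv: "Im (cnj (cinv x) * cinv y) = Im (cnj x * y) / ((cmod x)^2 * (cmod y)^2)"
  unfolding cinv_def by (simp add: Im_divide_of_real field_simps)

lemma TR:
  assumes "A \<noteq> 0" "x / A = of_real \<rho> * cis \<phi>"
  shows "Im (cnj (A * cis \<psi>) * x) = (cmod A)^2 * \<rho> * sin (\<phi> - \<psi>)"
proof -
  have x: "x = A * (of_real \<rho> * cis \<phi>)" using assms by (simp add: field_simps)
  show ?thesis unfolding x cmod_power2 by (simp add: sin_diff algebra_simps power2_eq_square)
qed

lemma TR2:
  assumes "A \<noteq> 0" "x / A = of_real \<rho> * cis \<phi>" "y / A = of_real \<sigma> * cis \<psi>"
  shows "Im (cnj x * y) = (cmod A)^2 * \<rho> * \<sigma> * sin (\<psi> - \<phi>)"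
proof -
  have x: "x = A * (of_real \<rho> * cis \<phi>)" using assms by (simp add: field_simps)
  have y: "y = A * (of_real \<sigma> * cis \<psi>)" using assms by (simp add: field_simps)
  show ?thesis unfolding x y cmod_power2 by (simp add: sin_diff algebra_simps power2_eq_square)
qed

lemma val_Im1: "val p (\<i> * K) w = Im (cnj K * (w - p)) / (cmod (w - p))^2"
  unfolding val_def by simp

lemma val_Im2: "val p (- \<i> * C) w = Im (cnj (w - p) * C) / (cmod (w - p))^2"
  unfolding val_def by (simp add: algebra_simps)

lemma circumc:
  assumes "Im (cnj a * b) \<noteq> 0"
  shows "Re (cnj (\<i> * (a - b) / of_real (2 * Im (cnj a * b))) * a) = 1/2"
    and "Re (cnj (\<i> * (a - b) / of_real (2 * Im (cnj a * b))) * b) = 1/2"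
proof -
  let ?D = "Im (cnj a * b)"
  have e: "cnj (\<i> * (a - b) / of_real (2 * ?D)) = (- \<i> * cnj (a - b)) / of_real (2 * ?D)"
    by simp
  have 1: "Re (- \<i> * cnj (a - b) * a) = ?D" by (simp add: algebra_simps)
  have 2: "Re (- \<i> * cnj (a - b) * b) = ?D" by (simp add: algebra_simps)
  show "Re (cnj (\<i> * (a - b) / of_real (2 * ?D)) * a) = 1/2"
  proof -
    have "cnj (\<i> * (a - b) / of_real (2 * ?D)) * a = (- \<i> * cnj (a - b) * a) / of_real (2 * ?D)"
      unfolding e by simp
    hence "Re (cnj (\<i> * (a - b) / of_real (2 * ?D)) * a) = Re (- \<i> * cnj (a - b) * a) / (2 * ?D)"
      by (simp only: Re_divide_of_real)
    thus ?thesis using assms 1 by simp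
  qed
  show "Re (cnj (\<i> * (a - b) / of_real (2 * ?D)) * b) = 1/2"
  proof -
    have "cnj (\<i> * (a - b) / of_real (2 * ?D)) * b = (- \<i> * cnj (a - b) * b) / of_real (2 * ?D)"
      unfolding e by simp
    hence "Re (cnj (\<i> * (a - b) / of_real (2 * ?D)) * b) = Re (- \<i> * cnj (a - b) * b) / (2 * ?D)"
      by (simp only: Re_divide_of_real)
    thus ?thesis using assms 2 by simp
  qed
qed

lemma self_angle: "wi \<noteq> p \<Longrightarrow> ccw_angle p wi wi = 2 * pi"
  unfolding ccw_angle_def by simp

lemma TRIG1:
  assumes "0 < \<theta>" "\<theta> < pi" "0 < \<phi>" "\<phi> \<le> 2 * pi"
  shows "\<phi> < \<theta> \<longleftrightarrow> (0 < sin \<phi> \<and> 0 < sin (\<theta> - \<phi>))"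
proof
  assume "\<phi> < \<theta>" thus "0 < sin \<phi> \<and> 0 < sin (\<theta> - \<phi>)"
    using assms by (auto intro!: sin_gt_zero)
next
  assume h: "0 < sin \<phi> \<and> 0 < sin (\<theta> - \<phi>)"
  have "\<phi> < pi"
  proof (rule ccontr)
    assume "\<not> \<phi> < pi"
    hence "sin \<phi> \<le> 0"
      using sin_le_zero[of \<phi>] assms(4) by (cases "\<phi> = 2 * pi") auto
    with h show False by simp
  qed
  show "\<phi> < \<theta>"
  proof (rule ccontr)
    assume "\<not> \<phi> < \<theta>"
    hence "0 \<le> sin (\<phi> - \<theta>)" using \<open>\<phi> < pi\<close> assms by (intro sin_ge_zero) auto
    moreover have "sin (\<theta> - \<phi>) = - sin (\<phi> - \<theta>)" by (metis minus_diff_eq sin_minus)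
    ultimately have "sin (\<theta> - \<phi>) \<le> 0" by simp
    with h show False by simp
  qed
qed

lemma support_of_circle:
  assumes "dist z p = r" "dist z x = r" "ball z r \<inter> W = {}" "x \<noteq> p"
  shows "val p (z - p) x = 1/2 \<and> (\<forall>w\<in>W-{p}. val p (z - p) w \<le> 1/2)"
proof -
  have z: "z = p + (z - p)" by simp
  have r: "r = cmod (z - p)" using assms(1) by (simp add: dist_norm norm_minus_commute)
  have "val p (z - p) x = 1/2" using assms(2) sphere_iff[OF assms(4), of "z - p"] r by simp
  moreover have "val p (z - p) w \<le> 1/2" if "w \<in> W - {p}" for w
  proof (rule ccontr)
    assume "\<not> ?thesis"
    hence "dist (p + (z - p)) w < cmod (z - p)" using ball_iff[of w p "z - p"] that by auto
    hence "w \<in> ball z r \<inter> W" using that r by (simp add: dist_norm)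
    with assms(3) show False by blast
  qed
  ultimately show ?thesis by blast
qed

lemma DTsup:
  assumes "DT_adj (W \<union> {p}) p w"
  shows "w \<in> W" "w \<noteq> p" "\<exists>c. val p c w = 1/2 \<and> (\<forall>x\<in>W-{p}. val p c x \<le> 1/2)"
proof -
  from assms obtain z r where zr: "dist z p = r" "dist z w = r" "ball z r \<inter> (W \<union> {p}) = {}"
    and w: "w \<in> W \<union> {p}" "p \<noteq> w" unfolding DT_adj_def by blast
  show "w \<in> W" "w \<noteq> p" using w by auto
  have "ball z r \<inter> W = {}" using zr(3) by blast
  from support_of_circle[OF zr(1,2) this] w show "\<exists>c. val p c w = 1/2 \<and> (\<forall>x\<in>W-{p}. val p c x \<le> 1/2)"
    by metis
qed

lemma DGsup:
  assumes "DGminus_adj P W p q"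
  shows "\<exists>c. val p c q = 1/2 \<and> (\<forall>x\<in>W-{p}. val p c x \<le> 1/2)"
proof -
  from assms obtain z r where zr: "dist z p = r" "dist z q = r" "ball z r \<inter> W = {}"
    and w: "p \<noteq> q" unfolding DGminus_adj_def by blast
  from support_of_circle[OF zr] w show ?thesis by metis
qed

lemma DT_of_max:
  assumes "u \<in> W - {p}" "\<forall>w\<in>W-{p}. val p k w \<le> val p k u" "0 < val p k u"
  shows "DT_adj (W \<union> {p}) p u"
  using circ[of u p k W] assms unfolding DT_adj_def by auto

lemma DG_of:
  assumes "p \<in> P" "q \<in> P" "q \<noteq> p" "0 < val p k q" "\<forall>w\<in>W-{p}. val p k w \<le> val p k q"
  shows "DGminus_adj P W p q"
proof -
  obtain z r where "dist z p = r" "dist z q = r" "ball z r \<inter> (W \<union> {p}) = {}"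
    using circ[of q p k W] assms by blast
  thus ?thesis using assms unfolding DGminus_adj_def by blast
qed

lemma maxex:
  assumes "finite W" "W - {p} \<noteq> {}"
  shows "\<exists>u\<in>W-{p}. \<forall>w\<in>W-{p}. val p k w \<le> val p k u"
proof -
  let ?S = "val p k ` (W - {p})"
  have "finite ?S" "?S \<noteq> {}" using assms by auto
  hence "Max ?S \<in> ?S" by (rule Max_in)
  then obtain u where u: "u \<in> W - {p}" "val p k u = Max ?S" by (metis imageE)
  have "\<forall>w\<in>W-{p}. val p k w \<le> val p k u" using u(2) \<open>finite ?S\<close> by auto
  with u(1) show ?thesis by blast
qed

lemma pos_mult_iff: "0 < (c::real) \<Longrightarrow> 0 < c * s \<longleftrightarrow> 0 < s"
  by (simp add: zero_less_mult_iff)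

lemma rho_pos: "u \<noteq> p \<Longrightarrow> wi \<noteq> p \<Longrightarrow> 0 < cmod ((u - p) / (wi - p))" by simp

lemma ANG:
  assumes "wi \<noteq> p" "u \<noteq> p" "wj \<noteq> p" "ccw_angle p wi wj < pi"
  shows "ccw_angle p wi u < ccw_angle p wi wj \<longleftrightarrow>
    (0 < Im (cnj (wi - p) * (u - p)) \<and> 0 < Im (cnj (u - p) * (wj - p)))"
proof -
  let ?A = "wi - p"
  note ru = rep[OF assms(2,1)] and rj = rep[OF assms(3,1)]
  have r1: "?A / ?A = of_real 1 * cis 0" using assms by simp
  have A0: "?A \<noteq> 0" using assms by simp
  have e1: "Im (cnj ?A * (u - p)) = (cmod ?A)^2 * 1 * cmod ((u - p) / ?A) * sin (ccw_angle p wi u - 0)"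
    by (rule TR2[OF A0 r1 ru(1)])
  have e2: "Im (cnj (u - p) * (wj - p)) = (cmod ?A)^2 * cmod ((u - p) / ?A) * cmod ((wj - p) / ?A)
      * sin (ccw_angle p wi wj - ccw_angle p wi u)"
    by (rule TR2[OF A0 ru(1) rj(1)])
  have p1: "0 < (cmod ?A)^2" "0 < cmod ((u - p) / ?A)" "0 < cmod ((wj - p) / ?A)" using assms by auto
  have "0 < Im (cnj ?A * (u - p)) \<longleftrightarrow> 0 < sin (ccw_angle p wi u)"
    unfolding e1 using p1 pos_mult_iff[of "(cmod ?A)^2 * 1 * cmod ((u - p) / ?A)" "sin (ccw_angle p wi u - 0)"] by simp
  moreover have "0 < Im (cnj (u - p) * (wj - p)) \<longleftrightarrow> 0 < sin (ccw_angle p wi wj - ccw_angle p wi u)"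
    unfolding e2 using p1 by (intro pos_mult_iff) simp
  ultimately show ?thesis using TRIG1[OF rj(2) assms(4) ru(2,3)] by simp
qed

lemma div_pos_iff: "0 < (d::real) \<Longrightarrow> 0 < x / d \<longleftrightarrow> 0 < x"
  by (simp add: zero_less_divide_iff)

lemma DEC:
  assumes "u \<noteq> p" "wi \<noteq> p" "wj \<noteq> p" "0 < Im (cnj (cinv (wi - p)) * cinv (wj - p))"
  obtains \<alpha> \<beta> where "\<forall>c. val p c u = \<alpha> * val p c wi + \<beta> * val p c wj"
    "0 < \<alpha> \<longleftrightarrow> 0 < Im (cnj (u - p) * (wj - p))"
    "0 < \<beta> \<longleftrightarrow> 0 < Im (cnj (wi - p) * (u - p))"
proof -
  let ?a = "cinv (wi - p)" and ?b = "cinv (wj - p)" and ?x = "cinv (u - p)"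
  let ?D = "Im (cnj ?a * ?b)"
  define \<alpha> where "\<alpha> = Im (cnj ?x * ?b) / ?D"
  define \<beta> where "\<beta> = Im (cnj ?a * ?x) / ?D"
  have x: "?x = of_real \<alpha> * ?a + of_real \<beta> * ?b"
    unfolding \<alpha>_def \<beta>_def using assms(4) by (intro cramer) simp
  have "val p c u = \<alpha> * val p c wi + \<beta> * val p c wj" for c
    unfolding val_inv x Re_lin ..
  moreover have "0 < \<alpha> \<longleftrightarrow> 0 < Im (cnj (u - p) * (wj - p))"
  proof -
    have "0 < \<alpha> \<longleftrightarrow> 0 < Im (cnj ?x * ?b)" unfolding \<alpha>_def using assms(4) by (rule div_pos_iff)
    also have "\<dots> \<longleftrightarrow> 0 < Im (cnj (u - p) * (wj - p))" unfolding Im_cinv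
      using assms(1,3) by (intro div_pos_iff) simp
    finally show ?thesis .
  qed
  moreover have "0 < \<beta> \<longleftrightarrow> 0 < Im (cnj (wi - p) * (u - p))"
  proof -
    have "0 < \<beta> \<longleftrightarrow> 0 < Im (cnj ?a * ?x)" unfolding \<beta>_def using assms(4) by (rule div_pos_iff)
    also have "\<dots> \<longleftrightarrow> 0 < Im (cnj (wi - p) * (u - p))" unfolding Im_cinv
      using assms(1,2) by (intro div_pos_iff) simp
    finally show ?thesis .
  qed
  ultimately show ?thesis using that by blast
qed

lemma Dpos:
  assumes "wi \<noteq> p" "wj \<noteq> p" "ccw_angle p wi wj < pi"
  shows "0 < Im (cnj (cinv (wi - p)) * cinv (wj - p))"
proof -
  let ?A = "wi - p"
  note rj = rep[OF assms(2,1)]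
  have r1: "?A / ?A = of_real 1 * cis 0" using assms by simp
  have A0: "?A \<noteq> 0" using assms by simp
  have e: "Im (cnj ?A * (wj - p)) = (cmod ?A)^2 * 1 * cmod ((wj - p) / ?A) * sin (ccw_angle p wi wj - 0)"
    by (rule TR2[OF A0 r1 rj(1)])
  have "0 < sin (ccw_angle p wi wj)" using rj(2) assms(3) by (intro sin_gt_zero)
  hence "0 < Im (cnj ?A * (wj - p))" unfolding e using assms by simp
  thus ?thesis unfolding Im_cinv using assms by simp
qed

lemma caseB:
  assumes "finite W" "W - {p} \<noteq> {}" "p \<in> P" "q \<in> P" "q \<noteq> p" "wi \<noteq> p" "wj \<noteq> p"
    and hyp: "\<forall>w. DT_adj (W \<union> {p}) p w \<longrightarrow> \<not> ccw_angle p wi w < ccw_angle p wi wj"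
    and "ccw_angle p wi q < ccw_angle p wi wj" "pi \<le> ccw_angle p wi wj"
  shows "DGminus_adj P W p q"
proof -
  define \<theta> where "\<theta> = ccw_angle p wi wj"
  define \<phi>q where "\<phi>q = ccw_angle p wi q"
  let ?A = "wi - p"
  have A0: "?A \<noteq> 0" using assms by simp
  note rj = rep[OF assms(7,6)] and rq = rep[OF assms(5,6)]
  define \<psi> where "\<psi> = max pi ((\<phi>q + \<theta>) / 2)"
  define C where "C = ?A * cis \<psi>"
  define k where "k = - \<i> * C"
  have rC: "C / ?A = of_real 1 * cis \<psi>" unfolding C_def using A0 by simp
  have vk: "val p k u = ((cmod ?A)^2 * cmod ((u - p) / ?A) * 1 / (cmod (u - p))^2) * sin (\<psi> - ccw_angle p wi u)"
    if "u \<noteq> p" for u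
  proof -
    have "val p k u = Im (cnj (u - p) * C) / (cmod (u - p))^2" unfolding k_def by (rule val_Im2)
    also have "Im (cnj (u - p) * C) = (cmod ?A)^2 * cmod ((u - p) / ?A) * 1 * sin (\<psi> - ccw_angle p wi u)"
      by (rule TR2[OF A0 rep(1)[OF that assms(6)] rC])
    finally show ?thesis by simp
  qed
  have Kpos: "0 < (cmod ?A)^2 * cmod ((u - p) / ?A) * 1 / (cmod (u - p))^2" if "u \<noteq> p" for u
    using that A0 by simp
  have bounds: "pi \<le> \<psi>" "\<psi> \<le> \<theta>" "\<phi>q < \<psi>" "\<psi> - \<phi>q < pi" "\<theta> \<le> 2 * pi" "0 < \<phi>q"
    using assms(9,10) rj(3) rq(2) unfolding \<psi>_def \<theta>_def \<phi>q_def by (auto simp: max_def)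
  have s: "0 < sin (\<psi> - ccw_angle p wi q)" using bounds unfolding \<phi>q_def by (intro sin_gt_zero) auto
  have vq: "0 < val p k q" unfolding vk[OF assms(5)] by (rule mult_pos_pos[OF Kpos[OF assms(5)] s])
  have neg: "val p k u \<le> 0" if "u \<noteq> p" "\<theta> \<le> ccw_angle p wi u" for u
  proof -
    have "0 \<le> sin (ccw_angle p wi u - \<psi>)" using bounds that rep(3)[OF that(1) assms(6)]
      by (intro sin_ge_zero) auto
    moreover have "sin (\<psi> - ccw_angle p wi u) = - sin (ccw_angle p wi u - \<psi>)" by (metis minus_diff_eq sin_minus)
    ultimately have s: "sin (\<psi> - ccw_angle p wi u) \<le> 0" by simp
    show ?thesis unfolding vk[OF that(1)] by (rule mult_nonneg_nonpos[OF less_imp_le[OF Kpos[OF that(1)]] s])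
  qed
  obtain u where u: "u \<in> W - {p}" "\<forall>w\<in>W-{p}. val p k w \<le> val p k u" using maxex[OF assms(1,2)] by blast
  have "val p k u \<le> 0"
  proof (rule ccontr)
    assume "\<not> ?thesis"
    hence "DT_adj (W \<union> {p}) p u" using DT_of_max[OF u] by simp
    hence "\<theta> \<le> ccw_angle p wi u" using hyp unfolding \<theta>_def by force
    with neg u(1) \<open>\<not> ?thesis\<close> show False by auto
  qed
  hence "\<forall>w\<in>W-{p}. val p k w \<le> val p k q" using u(2) vq by force
  thus ?thesis using DG_of[OF assms(3,4,5) vq] by simp
qed

lemma caseA_empty:
  assumes "finite W" "W - {p} \<noteq> {}" "wi \<noteq> p" "wj \<noteq> p"
    and hyp: "\<forall>w. DT_adj (W \<union> {p}) p w \<longrightarrow> \<not> ccw_angle p wi w < ccw_angle p wi wj"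
    and th: "ccw_angle p wi wj < pi" and iW: "wi \<in> W" "wj \<in> W"
    and ca: "val p ca wi = 1/2" "\<forall>x\<in>W-{p}. val p ca x \<le> 1/2"
    and cb: "val p cb wj = 1/2" "\<forall>x\<in>W-{p}. val p cb x \<le> 1/2"
    and c: "val p c wi = 1/2" "val p c wj = 1/2"
  shows "\<forall>w\<in>W-{p}. val p c w \<le> 1/2"
proof -
  obtain u where u: "u \<in> W - {p}" "\<forall>w\<in>W-{p}. val p c w \<le> val p c u" using maxex[OF assms(1,2)] by blast
  have up: "u \<noteq> p" using u by auto
  have "val p c u \<le> 1/2"
  proof (rule ccontr)
    assume gt: "\<not> ?thesis"
    hence "DT_adj (W \<union> {p}) p u" using DT_of_max[OF u] by simp
    hence na: "\<not> ccw_angle p wi u < ccw_angle p wi wj" using hyp by blast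
    obtain \<alpha> \<beta> where ab: "\<forall>c. val p c u = \<alpha> * val p c wi + \<beta> * val p c wj"
      "0 < \<alpha> \<longleftrightarrow> 0 < Im (cnj (u - p) * (wj - p))"
      "0 < \<beta> \<longleftrightarrow> 0 < Im (cnj (wi - p) * (u - p))"
      using DEC[OF up assms(3,4) Dpos[OF assms(3,4) th]] by blast
    have s: "1 < \<alpha> + \<beta>" using gt ab(1) c by simp
    have "\<not> (0 < \<alpha> \<and> 0 < \<beta>)" using na ANG[OF assms(3) up assms(4) th] ab(2,3) by blast
    hence "\<alpha> \<le> 0 \<or> \<beta> \<le> 0" by auto
    thus False
    proof
      assume a: "\<alpha> \<le> 0"
      have "\<alpha> * (1/2) \<le> \<alpha> * val p cb wi" using cb(2) assms(3) iW a
        by (intro mult_left_mono_neg) auto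
      moreover have "val p cb u = \<alpha> * val p cb wi + \<beta> * (1/2)" using ab(1) cb(1) by simp
      ultimately have "1/2 < val p cb u" using s by linarith
      with cb(2) u(1) show False by (meson not_le)
    next
      assume b: "\<beta> \<le> 0"
      have "\<beta> * (1/2) \<le> \<beta> * val p ca wj" using ca(2) assms(4) iW b
        by (intro mult_left_mono_neg) auto
      moreover have "val p ca u = \<alpha> * (1/2) + \<beta> * val p ca wj" using ab(1) ca(1) by simp
      ultimately have "1/2 < val p ca u" using s by linarith
      with ca(2) u(1) show False by (meson not_le)
    qed
  qed
  thus ?thesis using u(2) by force
qed

theorem mainTheorem2:
  fixes P W :: "complex set" and p q wi wj :: complex
  assumes "finite P" and "finite W" and "gen_pos (P \<union> W)"
    and "p \<in> P" and "W - {p} \<noteq> {}"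
    and "DT_adj (W \<union> {p}) p wi" and "DT_adj (W \<union> {p}) p wj"
    and "\<forall>w. DT_adj (W \<union> {p}) p w \<longrightarrow> \<not> ccw_angle p wi w < ccw_angle p wi wj"
    and "q \<in> P" and "q \<noteq> p"
    and "ccw_angle p wi q < ccw_angle p wi wj"
  shows "(ccw_angle p wi wj \<ge> pi \<longrightarrow> DGminus_adj P W p q) \<and>
         (ccw_angle p wi wj < pi \<longrightarrow> (DGminus_adj P W p q \<longleftrightarrow> in_circumdisk p wi wj q))"
proof -
  note hyp = assms(8)
  have wiW: "wi \<in> W" "wi \<noteq> p" using DTsup[OF assms(6)] by auto
  have wjW: "wj \<in> W" "wj \<noteq> p" using DTsup[OF assms(7)] by auto
  obtain ca where ca: "val p ca wi = 1/2" "\<forall>x\<in>W-{p}. val p ca x \<le> 1/2" using DTsup(3)[OF assms(6)] by blast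
  obtain cb where cb: "val p cb wj = 1/2" "\<forall>x\<in>W-{p}. val p cb x \<le> 1/2" using DTsup(3)[OF assms(7)] by blast
  have th2: "ccw_angle p wi wj \<le> 2 * pi" using rep(3)[OF wjW(2) wiW(2)] .
  have partB: "ccw_angle p wi wj \<ge> pi \<longrightarrow> DGminus_adj P W p q"
    using caseB[OF assms(2,5,4,9,10) wiW(2) wjW(2) hyp assms(11)] by blast
  have partA: "DGminus_adj P W p q \<longleftrightarrow> in_circumdisk p wi wj q" if th: "ccw_angle p wi wj < pi"
  proof -
    have wij: "wi \<noteq> wj" using th self_angle[OF wiW(2)] by auto
    have qwi: "q \<noteq> wi" using assms(11) self_angle[OF wiW(2)] th2 by auto
    have qwj: "q \<noteq> wj" using assms(11) by auto
    let ?a = "cinv (wi - p)" and ?b = "cinv (wj - p)"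
    let ?D = "Im (cnj ?a * ?b)"
    have D: "0 < ?D" by (rule Dpos[OF wiW(2) wjW(2) th])
    define c0 where "c0 = \<i> * (?a - ?b) / of_real (2 * ?D)"
    have c0: "val p c0 wi = 1/2" "val p c0 wj = 1/2"
      unfolding val_inv c0_def using circumc[of ?a ?b] D by auto
    show ?thesis
    proof
      assume "DGminus_adj P W p q"
      then obtain g where g: "val p g q = 1/2" "\<forall>x\<in>W-{p}. val p g x \<le> 1/2" using DGsup by blast
      obtain \<alpha> \<beta> where ab: "\<forall>c. val p c q = \<alpha> * val p c wi + \<beta> * val p c wj"
        "0 < \<alpha> \<longleftrightarrow> 0 < Im (cnj (q - p) * (wj - p))"
        "0 < \<beta> \<longleftrightarrow> 0 < Im (cnj (wi - p) * (q - p))"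
        using DEC[OF assms(10) wiW(2) wjW(2) D] by blast
      have pos: "0 < \<alpha>" "0 < \<beta>" using ANG[OF wiW(2) assms(10) wjW(2) th] assms(11) ab(2,3) by auto
      have vc: "val p c0 q = \<alpha> * (1/2) + \<beta> * (1/2)" using ab(1) c0 by (simp only:)
      have gi: "val p g wi \<le> 1/2" "val p g wj \<le> 1/2" using g(2) wiW wjW by auto
      have "\<alpha> * val p g wi \<le> \<alpha> * (1/2)" using gi pos by (intro mult_left_mono) auto
      moreover have "\<beta> * val p g wj \<le> \<beta> * (1/2)" using gi pos by (intro mult_left_mono) auto
      ultimately have ge: "1/2 \<le> val p c0 q" using ab(1) g(1) vc by (metis add_mono)
      have e1: "dist (p + c0) p = cmod c0" by (simp add: dist_norm)
      have e2: "dist (p + c0) wi = cmod c0" "dist (p + c0) wj = cmod c0"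
        using sphere_iff[OF wiW(2)] sphere_iff[OF wjW(2)] c0 by auto
      have "val p c0 q \<noteq> 1/2"
      proof
        assume "val p c0 q = 1/2"
        hence "dist (p + c0) q = cmod c0" using sphere_iff[OF assms(10)] by auto
        hence "concyclic4 p wi wj q" unfolding concyclic4_def using e1 e2 by blast
        moreover have "distinct [p, wi, wj, q]" using wiW wjW wij qwi qwj assms(10) by auto
        ultimately show False using assms(3,4,9) wiW(1) wjW(1) unfolding gen_pos_def by blast
      qed
      hence "1/2 < val p c0 q" using ge by simp
      hence "dist (p + c0) q < cmod c0" using ball_iff[OF assms(10)] by auto
      thus "in_circumdisk p wi wj q" unfolding in_circumdisk_def using e1 e2 by metis
    next
      assume "in_circumdisk p wi wj q"
      then obtain z where z: "dist z p = dist z wi" "dist z wi = dist z wj" "dist z q < dist z p"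
        unfolding in_circumdisk_def by blast
      define c where "c = z - p"
      have zc: "z = p + c" "dist z p = cmod c" unfolding c_def by (auto simp: dist_norm norm_minus_commute)
      have cw: "val p c wi = 1/2" "val p c wj = 1/2"
        using sphere_iff[OF wiW(2), of c] sphere_iff[OF wjW(2), of c] z zc by auto
      have cq: "1/2 < val p c q" using ball_iff[OF assms(10), of c] z zc by auto
      have "\<forall>w\<in>W-{p}. val p c w \<le> 1/2"
        by (rule caseA_empty[OF assms(2,5) wiW(2) wjW(2) hyp th wiW(1) wjW(1) ca cb cw])
      hence "\<forall>w\<in>W-{p}. val p c w \<le> val p c q" using cq by force
      thus "DGminus_adj P W p q" using DG_of[OF assms(4,9,10), of c] cq by simp
    qed
  qed
  show ?thesis using partA partB by blast
qed

end
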